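(* Let $N, M, m \in \mathbb{N}$, $n_1,\dots,n_N\in\mathbb{N}$, let $\vec{A}\in\mathbb{K}^{M\times N}$ with columns $\vec{a}_1,\dots,\vec{a}_N$, and let $\vec{B}_i\in\mathbb{K}^{m\times n_i}$ for $i\in[N]$. Let $\vec{H}$ be the hierarchical measurement operator $$\vec{H}(\vec{x}_1,\dots,\vec{x}_N)=\sum_{i=1}^N \vec{a}_i\otimes(\vec{B}_i\vec{x}_i).$$ Let $s\in[N]$ and $\sigma=(\sigma_1,\dots,\sigma_N)$ with $\sigma_i\le n_i$. Assume each $\vec{B}_i$ satisfies the $\sigma_i$-RIP with constant $\delta_{\sigma_i}(\vec{B}_i)$, and $\vec{A}$ satisfies the $s$-RIP with constant $\delta_s(\vec{A})$. Then $$\delta_{(s,\sigma)}(\vec{H})\le \delta_s(\vec{A})+\sup_i\delta_{\sigma_i}(\vec{B}_i)+\delta_s(\vec{A})\cdot\sup_i\delta_{\sigma_i}(\vec{B}_i).$$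
   Context: $\mathbb{K}$ is $\mathbb{R}$ or $\mathbb{C}$; $[N]=\{1,\dots,N\}$; $\otimes$ is the tensor (Kronecker) product of vectors, with $\mathbb{K}^M\otimes\mathbb{K}^m\cong\mathbb{K}^{Mm}$ carrying the Euclidean norm; $\vec{H}$ maps $\mathbb{K}^{n_1}\times\dots\times\mathbb{K}^{n_N}$ (with Euclidean norm $\|\vec{x}\|^2=\sum_i\|\vec{x}_i\|^2$) into $\mathbb{K}^{Mm}$. The $k$-RIP constant $\delta_k(\vec{C})$ of a matrix $\vec{C}$ is the smallest $\delta\ge0$ with $(1-\delta)\|\vec{x}\|^2\le\|\vec{C}\vec{x}\|^2\le(1+\delta)\|\vec{x}\|^2$ for all $k$-sparse $\vec{x}$ (at most $k$ nonzero entries). A vector $\vec{x}=(\vec{x}_1,\dots,\vec{x}_N)\in\mathbb{K}^{n_1}\times\dots\times\mathbb{K}^{n_N}$ is $(s,\sigma)$-sparse if at most $s$ blocks $\vec{x}_i$ are nonzero and each nonzero block $\vec{x}_i$ has at most $\sigma_i$ nonzero entries. The $(s,\sigma)$-HiRIP constant $\delta_{(s,\sigma)}(\vec{H})$ is the smallest $\delta\ge0$ with $(1-\delta)\|\vec{x}\|^2\le\|\vec{H}\vec{x}\|^2\le(1+\delta)\|\vec{x}\|^2$ for all $(s,\sigma)$-sparse $\vec{x}$. *)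

theory Defs
  imports Complex_Main
begin

text \<open>Vectors in K^n are functions nat => 'a, entries indexed 0..n-1 (entries
at indices >= n are ignored). Matrices in K^(r x c) are functions nat => nat => 'a,
entry (row, column). The scalar field K is a real normed field ('a::real_normed_field),
which covers both real and complex.\<close>

definition vnorm2 :: "nat \<Rightarrow> (nat \<Rightarrow> 'a::real_normed_field) \<Rightarrow> real" where
  "vnorm2 n x = (\<Sum>j<n. (norm (x j))\<^sup>2)"

definition mat_vec :: "nat \<Rightarrow> (nat \<Rightarrow> nat \<Rightarrow> 'a::real_normed_field) \<Rightarrow> (nat \<Rightarrow> 'a) \<Rightarrow> (nat \<Rightarrow> 'a)" where
  "mat_vec ncols C x = (\<lambda>r. \<Sum>j<ncols. C r j * x j)"

definition sparse :: "nat \<Rightarrow> nat \<Rightarrow> (nat \<Rightarrow> 'a::zero) \<Rightarrow> bool" where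
  "sparse n k x \<longleftrightarrow> card {j. j < n \<and> x j \<noteq> 0} \<le> k"

definition rip_const :: "nat \<Rightarrow> nat \<Rightarrow> (nat \<Rightarrow> nat \<Rightarrow> 'a::real_normed_field) \<Rightarrow> nat \<Rightarrow> real" where
  "rip_const nrows ncols C k = Inf {\<delta>. \<delta> \<ge> 0 \<and> (\<forall>x. sparse ncols k x \<longrightarrow>
      (1 - \<delta>) * vnorm2 ncols x \<le> vnorm2 nrows (mat_vec ncols C x) \<and>
      vnorm2 nrows (mat_vec ncols C x) \<le> (1 + \<delta>) * vnorm2 ncols x)}"

text \<open>Block vectors x in K^(n_0) x ... x K^(n_(N-1)): x i j is entry j of block i.\<close>
definition hnorm2 :: "nat \<Rightarrow> (nat \<Rightarrow> nat) \<Rightarrow> (nat \<Rightarrow> nat \<Rightarrow> 'a::real_normed_field) \<Rightarrow> real" where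
  "hnorm2 N n x = (\<Sum>i<N. vnorm2 (n i) (x i))"

definition hsparse :: "nat \<Rightarrow> (nat \<Rightarrow> nat) \<Rightarrow> nat \<Rightarrow> (nat \<Rightarrow> nat) \<Rightarrow> (nat \<Rightarrow> nat \<Rightarrow> 'a::zero) \<Rightarrow> bool" where
  "hsparse N n s \<sigma> x \<longleftrightarrow>
     card {i. i < N \<and> (\<exists>j<n i. x i j \<noteq> 0)} \<le> s \<and>
     (\<forall>i<N. sparse (n i) (\<sigma> i) (x i))"

text \<open>Hierarchical operator H x = sum_i a_i \<otimes> (B_i x_i) in K^M \<otimes> K^m = K^(M*m),
Kronecker index convention: (a \<otimes> b)_(k*m + l) = a_k * b_l for k < M, l < m.\<close>
definition hier_op :: "nat \<Rightarrow> nat \<Rightarrow> (nat \<Rightarrow> nat) \<Rightarrow> (nat \<Rightarrow> nat \<Rightarrow> 'a::real_normed_field)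
     \<Rightarrow> (nat \<Rightarrow> nat \<Rightarrow> nat \<Rightarrow> 'a) \<Rightarrow> (nat \<Rightarrow> nat \<Rightarrow> 'a) \<Rightarrow> (nat \<Rightarrow> 'a)" where
  "hier_op N m n A B x = (\<lambda>p. \<Sum>i<N. A (p div m) i * mat_vec (n i) (B i) (x i) (p mod m))"

definition hirip_const :: "nat \<Rightarrow> nat \<Rightarrow> nat \<Rightarrow> (nat \<Rightarrow> nat) \<Rightarrow> (nat \<Rightarrow> nat \<Rightarrow> 'a::real_normed_field)
     \<Rightarrow> (nat \<Rightarrow> nat \<Rightarrow> nat \<Rightarrow> 'a) \<Rightarrow> nat \<Rightarrow> (nat \<Rightarrow> nat) \<Rightarrow> real" where
  "hirip_const N M m n A B s \<sigma> = Inf {\<delta>. \<delta> \<ge> 0 \<and> (\<forall>x. hsparse N n s \<sigma> x \<longrightarrow>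
      (1 - \<delta>) * hnorm2 N n x \<le> vnorm2 (M * m) (hier_op N m n A B x) \<and>
      vnorm2 (M * m) (hier_op N m n A B x) \<le> (1 + \<delta>) * hnorm2 N n x)}"

end

theory Submission imports Defs begin

lemma sum_pairs: fixes M m :: nat shows "(\<Sum>p<M*m. g p) = (\<Sum>k<M. \<Sum>l<m. g (k*m+l))"
proof -
  have "\<And>k. sum g {k*m..<k*m+m} = (\<Sum>l<m. g (k*m+l))"
  proof -
    fix k
    have "{k*m..<k*m+m} = (\<lambda>l. k*m+l) ` {..<m}" apply (auto simp: image_iff)
      apply (rule_tac x="x - k*m" in bexI) by auto
    thus "sum g {k*m..<k*m+m} = (\<Sum>l<m. g (k*m+l))" by (simp add: sum.reindex)
  qed
  thus ?thesis by (simp add: sum.nat_group[symmetric])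
qed

lemma vnorm2_nonneg: "0 \<le> vnorm2 n x"
  unfolding vnorm2_def by (simp add: sum_nonneg)

lemma rip_bound:
  fixes C :: "nat \<Rightarrow> nat \<Rightarrow> 'a::real_normed_field"
  shows "vnorm2 nr (mat_vec nc C x) \<le> (\<Sum>r<nr. (\<Sum>j<nc. norm (C r j))\<^sup>2) * vnorm2 nc x"
proof -
  let ?a = "vnorm2 nc x"
  have xj: "norm (x j) \<le> sqrt ?a" if "j < nc" for j
  proof -
    have "(norm (x j))\<^sup>2 \<le> ?a" unfolding vnorm2_def
      using that by (intro member_le_sum) auto
    thus ?thesis by (simp add: real_le_rsqrt)
  qed
  have r: "(norm (mat_vec nc C x r))\<^sup>2 \<le> (\<Sum>j<nc. norm (C r j))\<^sup>2 * ?a" for r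
  proof -
    have "norm (mat_vec nc C x r) \<le> (\<Sum>j<nc. norm (C r j) * norm (x j))"
      unfolding mat_vec_def by (rule order_trans[OF norm_sum]) (simp add: norm_mult)
    also have "\<dots> \<le> (\<Sum>j<nc. norm (C r j) * sqrt ?a)"
      by (intro sum_mono mult_left_mono xj) auto
    also have "\<dots> = (\<Sum>j<nc. norm (C r j)) * sqrt ?a" by (simp add: sum_distrib_right)
    finally have "(norm (mat_vec nc C x r))\<^sup>2 \<le> ((\<Sum>j<nc. norm (C r j)) * sqrt ?a)\<^sup>2"
      by (intro power_mono) auto
    also have "\<dots> = (\<Sum>j<nc. norm (C r j))\<^sup>2 * ?a"
      using vnorm2_nonneg[of nc x] by (simp add: power_mult_distrib)
    finally show ?thesis .
  qed
  show ?thesis unfolding vnorm2_def[of nr] sum_distrib_right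
    by (intro sum_mono r)
qed

lemma rip_props:
  fixes C :: "nat \<Rightarrow> nat \<Rightarrow> 'a::real_normed_field"
  assumes "sparse nc k x"
  shows "(1 - rip_const nr nc C k) * vnorm2 nc x \<le> vnorm2 nr (mat_vec nc C x)
       \<and> vnorm2 nr (mat_vec nc C x) \<le> (1 + rip_const nr nc C k) * vnorm2 nc x
       \<and> rip_const nr nc C k \<ge> 0"
proof -
  define S where "S = {\<delta>. \<delta> \<ge> 0 \<and> (\<forall>x. sparse nc k x \<longrightarrow>
      (1 - \<delta>) * vnorm2 nc x \<le> vnorm2 nr (mat_vec nc C x) \<and>
      vnorm2 nr (mat_vec nc C x) \<le> (1 + \<delta>) * vnorm2 nc x)}"
  have rc: "rip_const nr nc C k = Inf S" unfolding S_def rip_const_def by simp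
  define K where "K = (\<Sum>r<nr. (\<Sum>j<nc. norm (C r j))\<^sup>2)"
  have K0: "K \<ge> 0" unfolding K_def by (simp add: sum_nonneg)
  have "1 + K \<in> S" unfolding S_def
  proof (intro CollectI conjI allI impI)
    fix y
    show "(1 - (1+K)) * vnorm2 nc y \<le> vnorm2 nr (mat_vec nc C y)"
      using K0 vnorm2_nonneg[of nc y] vnorm2_nonneg[of nr "mat_vec nc C y"]
    proof -
      have "K * vnorm2 nc y \<ge> 0" using K0 vnorm2_nonneg[of nc y] by simp
      thus ?thesis using vnorm2_nonneg[of nr "mat_vec nc C y"] by (simp add: algebra_simps)
    qed
    show "vnorm2 nr (mat_vec nc C y) \<le> (1 + (1+K)) * vnorm2 nc y"
    proof -
      have "vnorm2 nr (mat_vec nc C y) \<le> K * vnorm2 nc y" using rip_bound[of nr nc C y] unfolding K_def .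
      also have "\<dots> \<le> (1 + (1+K)) * vnorm2 nc y" using vnorm2_nonneg[of nc y] by (intro mult_right_mono) auto
      finally show ?thesis .
    qed
  qed (use K0 in auto)
  hence ne: "S \<noteq> {}" by auto
  let ?a = "vnorm2 nc x" and ?b = "vnorm2 nr (mat_vec nc C x)"
  have a0: "?a \<ge> 0" and b0: "?b \<ge> 0" by (rule vnorm2_nonneg)+
  have mem: "\<And>d. d \<in> S \<Longrightarrow> (1 - d) * ?a \<le> ?b \<and> ?b \<le> (1 + d) * ?a"
    using assms unfolding S_def by blast
  have nn: "Inf S \<ge> 0" by (rule cInf_greatest[OF ne]) (auto simp: S_def)
  show ?thesis
  proof (cases "?a = 0")
    case True
    then show ?thesis using b0 mem[OF \<open>1+K \<in> S\<close>] nn rc by simp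
  next
    case False
    hence ap: "?a > 0" using a0 by simp
    have l: "(?a - ?b) / ?a \<le> Inf S"
    proof (rule cInf_greatest[OF ne])
      fix d assume "d \<in> S"
      hence "(1 - d) * ?a \<le> ?b" using mem by blast
      thus "(?a - ?b) / ?a \<le> d" using ap by (simp add: divide_le_eq algebra_simps)
    qed
    have u: "(?b - ?a) / ?a \<le> Inf S"
    proof (rule cInf_greatest[OF ne])
      fix d assume "d \<in> S"
      hence "?b \<le> (1 + d) * ?a" using mem by blast
      thus "(?b - ?a) / ?a \<le> d" using ap by (simp add: divide_le_eq algebra_simps)
    qed
    show ?thesis using l u ap nn rc by (simp add: divide_le_eq algebra_simps)
  qed
qed


lemma rip_nonneg: "rip_const nr nc (C :: nat \<Rightarrow> nat \<Rightarrow> 'a::real_normed_field) k \<ge> 0"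
  using rip_props[of nc k "\<lambda>_. 0" nr C] by (simp add: sparse_def)

theorem theorem1:
  fixes N M m :: nat and n :: "nat \<Rightarrow> nat"
    and A :: "nat \<Rightarrow> nat \<Rightarrow> 'a::real_normed_field"
    and B :: "nat \<Rightarrow> nat \<Rightarrow> nat \<Rightarrow> 'a"
    and s :: nat and \<sigma> :: "nat \<Rightarrow> nat"
  assumes "1 \<le> s" and "s \<le> N"
    and "\<forall>i<N. \<sigma> i \<le> n i"
  shows "hirip_const N M m n A B s \<sigma> \<le>
           rip_const M N A s + (MAX i\<in>{..<N}. rip_const m (n i) (B i) (\<sigma> i))
           + rip_const M N A s * (MAX i\<in>{..<N}. rip_const m (n i) (B i) (\<sigma> i))"
proof -
  define dA where "dA = rip_const M N A s"
  define dB where "dB = (MAX i\<in>{..<N}. rip_const m (n i) (B i) (\<sigma> i))"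
  have dA0: "dA \<ge> 0" unfolding dA_def by (rule rip_nonneg)
  have dBi: "rip_const m (n i) (B i) (\<sigma> i) \<le> dB" if "i < N" for i
    unfolding dB_def using that by (intro Max_ge) auto
  have dB0: "dB \<ge> 0" using dBi[of 0] rip_nonneg[of m "n 0" "B 0" "\<sigma> 0"] assms(1,2) by simp
  define S where "S = {\<delta>. \<delta> \<ge> 0 \<and> (\<forall>x. hsparse N n s \<sigma> x \<longrightarrow>
      (1 - \<delta>) * hnorm2 N n x \<le> vnorm2 (M * m) (hier_op N m n A B x) \<and>
      vnorm2 (M * m) (hier_op N m n A B x) \<le> (1 + \<delta>) * hnorm2 N n x)}"
  have "dA + dB + dA * dB \<in> S" unfolding S_def
  proof (intro CollectI conjI allI impI)
    show "0 \<le> dA + dB + dA * dB" using dA0 dB0 by simp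
    fix x :: "nat \<Rightarrow> nat \<Rightarrow> 'a" assume hs: "hsparse N n s \<sigma> x"
    define y where "y i = mat_vec (n i) (B i) (x i)" for i
    define z where "z l = (\<lambda>i. y i l)" for l
    define X where "X = hnorm2 N n x"
    define Q where "Q = (\<Sum>l<m. vnorm2 N (z l))"
    define HH where "HH = vnorm2 (M * m) (hier_op N m n A B x)"
    have X0: "X \<ge> 0" unfolding X_def hnorm2_def by (simp add: sum_nonneg vnorm2_nonneg)
    have HH0: "HH \<ge> 0" unfolding HH_def by (rule vnorm2_nonneg)
    have HHeq: "HH = (\<Sum>l<m. vnorm2 M (mat_vec N A (z l)))"
    proof -
      have "HH = (\<Sum>k<M. \<Sum>l<m. (norm (hier_op N m n A B x (k*m+l)))\<^sup>2)"
        unfolding HH_def vnorm2_def by (rule sum_pairs)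
      also have "\<dots> = (\<Sum>k<M. \<Sum>l<m. (norm (mat_vec N A (z l) k))\<^sup>2)"
      proof (intro sum.cong refl)
        fix k l assume "l \<in> {..<m}"
        hence "(k*m+l) div m = k" "(k*m+l) mod m = l" by auto
        thus "(norm (hier_op N m n A B x (k*m+l)))\<^sup>2 = (norm (mat_vec N A (z l) k))\<^sup>2"
          unfolding hier_op_def mat_vec_def z_def y_def by simp
      qed
      also have "\<dots> = (\<Sum>l<m. vnorm2 M (mat_vec N A (z l)))"
        unfolding vnorm2_def by (rule sum.swap)
      finally show ?thesis .
    qed
    have Qeq: "Q = (\<Sum>i<N. vnorm2 m (y i))"
      unfolding Q_def vnorm2_def z_def by (rule sum.swap)
    have zsp: "sparse N s (z l)" for l
    proof -
      have "{i. i < N \<and> z l i \<noteq> 0} \<subseteq> {i. i < N \<and> (\<exists>j<n i. x i j \<noteq> 0)}"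
      proof safe
        fix i assume "i < N" "z l i \<noteq> 0"
        show "\<exists>j<n i. x i j \<noteq> 0"
        proof (rule ccontr)
          assume "\<not> (\<exists>j<n i. x i j \<noteq> 0)"
          hence "z l i = 0" unfolding z_def y_def mat_vec_def by simp
          thus False using \<open>z l i \<noteq> 0\<close> by simp
        qed
      qed
      hence "card {i. i < N \<and> z l i \<noteq> 0} \<le> card {i. i < N \<and> (\<exists>j<n i. x i j \<noteq> 0)}"
        by (intro card_mono) auto
      thus ?thesis using hs unfolding sparse_def hsparse_def by simp
    qed
    have Abnd: "(1 - dA) * Q \<le> HH \<and> HH \<le> (1 + dA) * Q"
    proof -
      have l: "(1 - dA) * vnorm2 N (z l) \<le> vnorm2 M (mat_vec N A (z l))"
        and u: "vnorm2 M (mat_vec N A (z l)) \<le> (1 + dA) * vnorm2 N (z l)" for l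
        using rip_props[OF zsp[of l], of M A] unfolding dA_def by auto
      have "(1 - dA) * Q \<le> HH" unfolding HHeq Q_def sum_distrib_left by (intro sum_mono l)
      moreover have "HH \<le> (1 + dA) * Q" unfolding HHeq Q_def sum_distrib_left by (intro sum_mono u)
      ultimately show ?thesis by simp
    qed
    have Bbnd: "(1 - dB) * X \<le> Q \<and> Q \<le> (1 + dB) * X"
    proof -
      have bi: "(1 - dB) * vnorm2 (n i) (x i) \<le> vnorm2 m (y i) \<and> vnorm2 m (y i) \<le> (1 + dB) * vnorm2 (n i) (x i)"
        if "i \<in> {..<N}" for i
      proof -
        have sp: "sparse (n i) (\<sigma> i) (x i)" using hs that unfolding hsparse_def by auto
        have r: "(1 - rip_const m (n i) (B i) (\<sigma> i)) * vnorm2 (n i) (x i) \<le> vnorm2 m (y i) \<and>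
            vnorm2 m (y i) \<le> (1 + rip_const m (n i) (B i) (\<sigma> i)) * vnorm2 (n i) (x i)"
          using rip_props[OF sp, of m "B i"] unfolding y_def by auto
        have d: "rip_const m (n i) (B i) (\<sigma> i) \<le> dB" using dBi that by auto
        have a0: "vnorm2 (n i) (x i) \<ge> 0" by (rule vnorm2_nonneg)
        have "(1 - dB) * vnorm2 (n i) (x i) \<le> (1 - rip_const m (n i) (B i) (\<sigma> i)) * vnorm2 (n i) (x i)"
          using d a0 by (intro mult_right_mono) auto
        moreover have "(1 + rip_const m (n i) (B i) (\<sigma> i)) * vnorm2 (n i) (x i) \<le> (1 + dB) * vnorm2 (n i) (x i)"
          using d a0 by (intro mult_right_mono) auto
        ultimately show ?thesis using r by linarith
      qed
      have "(1 - dB) * X \<le> Q" unfolding Qeq X_def hnorm2_def sum_distrib_left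
        using bi by (intro sum_mono) auto
      moreover have "Q \<le> (1 + dB) * X" unfolding Qeq X_def hnorm2_def sum_distrib_left
        using bi by (intro sum_mono) auto
      ultimately show ?thesis by simp
    qed
    show "HH \<le> (1 + (dA + dB + dA * dB)) * X" unfolding HH_def[symmetric] X_def[symmetric]
    proof -
      have "HH \<le> (1 + dA) * Q" using Abnd by simp
      also have "\<dots> \<le> (1 + dA) * ((1 + dB) * X)" using Bbnd dA0 by (intro mult_left_mono) auto
      also have "\<dots> = (1 + (dA + dB + dA * dB)) * X" by (simp add: algebra_simps)
      finally show ?thesis .
    qed
    show "(1 - (dA + dB + dA * dB)) * X \<le> HH" unfolding HH_def[symmetric] X_def[symmetric]
    proof (cases "dA \<le> 1")
      case True
      have "(1 - (dA + dB + dA * dB)) * X \<le> ((1 - dA) * (1 - dB)) * X"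
        using X0 dA0 dB0 by (intro mult_right_mono) (auto simp: algebra_simps)
      also have "\<dots> = (1 - dA) * ((1 - dB) * X)" by simp
      also have "\<dots> \<le> (1 - dA) * Q" using Bbnd True by (intro mult_left_mono) auto
      also have "\<dots> \<le> HH" using Abnd by simp
      finally show ?thesis .
    next
      case False
      have "dA * dB \<ge> 0" using dA0 dB0 by simp
      hence "1 - (dA + dB + dA * dB) \<le> 0" using False dB0 by linarith
      hence "(1 - (dA + dB + dA * dB)) * X \<le> 0" using X0 by (simp add: mult_nonpos_nonneg)
      thus ?thesis using HH0 by linarith
    qed
  qed
  moreover have "bdd_below S" unfolding S_def by (rule bdd_belowI[of _ 0]) auto
  ultimately have "Inf S \<le> dA + dB + dA * dB" by (rule cInf_lower)
  thus ?thesis unfolding S_def hirip_const_def dA_def dB_def .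
qed

end
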